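(* Let $n\ge 2$, $\theta\in[0,1]$, and $C(\mathbf u)=\theta\prod_{i=1}^n u_i+(1-\theta)\min\{u_1,\dots,u_n\}$ for $\mathbf u\in[0,1]^n$. Then $C$ is $I(\mathbf 1)$ and $I(-\mathbf 1)$, where $\mathbf 1=(1,\dots,1)$.
   Context: For $\alpha\in\{-1,1\}^n$ and a random vector $\mathbf X$, write $\alpha\mathbf X=(\alpha_1X_1,\dots,\alpha_nX_n)$; inequalities between vectors are componentwise. $\mathbf X$ is $I(\alpha)$ if for every $\mathbf x\in\mathbb R^n$, $\mathbb P[\alpha\mathbf X>\mathbf x\mid \alpha\mathbf X>\mathbf x']\le \mathbb P[\alpha\mathbf X>\mathbf x\mid \alpha\mathbf X>\mathbf x'']$ whenever $\mathbf x'\le\mathbf x''$ and $\mathbb P[\alpha\mathbf X>\mathbf x'']>0$. A copula is $I(\alpha)$ if a random vector with that distribution function is. *)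

theory Defs
  imports "HOL-Probability.Probability"
begin

text \<open>Random vectors in R^n are represented by their distribution: a probability
measure M on the Borel sets of real^'n (n = CARD('n)).\<close>

definition upper_orthant :: "real^'n \<Rightarrow> real^'n \<Rightarrow> (real^'n) set" where
  "upper_orthant \<alpha> x = {y. \<forall>i. \<alpha> $ i * y $ i > x $ i}"

definition cond_prob :: "'a measure \<Rightarrow> 'a set \<Rightarrow> 'a set \<Rightarrow> real" where
  "cond_prob M A B = measure M (A \<inter> B) / measure M B"

definition is_I :: "real^'n \<Rightarrow> (real^'n) measure \<Rightarrow> bool" where
  "is_I \<alpha> M \<longleftrightarrow>
     (\<forall>x x' x''. (\<forall>i. x' $ i \<le> x'' $ i) \<longrightarrow> measure M (upper_orthant \<alpha> x'') > 0 \<longrightarrow>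
        cond_prob M (upper_orthant \<alpha> x) (upper_orthant \<alpha> x')
          \<le> cond_prob M (upper_orthant \<alpha> x) (upper_orthant \<alpha> x''))"

text \<open>M is the distribution of a random vector whose distribution function is the
copula C (extended from [0,1]^n to R^n by clamping each coordinate to [0,1]).\<close>
definition has_copula_df :: "(real^'n \<Rightarrow> real) \<Rightarrow> (real^'n) measure \<Rightarrow> bool" where
  "has_copula_df C M \<longleftrightarrow> prob_space M \<and> sets M = sets borel \<and>
     (\<forall>x. measure M {y. \<forall>i. y $ i \<le> x $ i} = C (\<chi> i. max 0 (min 1 (x $ i))))"

text \<open>A copula C is I(alpha): a random vector with distribution function C exists and
(every) such random vector is I(alpha).\<close>
definition copula_is_I :: "real^'n \<Rightarrow> (real^'n \<Rightarrow> real) \<Rightarrow> bool" where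
  "copula_is_I \<alpha> C \<longleftrightarrow> (\<exists>M. has_copula_df C M) \<and> (\<forall>M. has_copula_df C M \<longrightarrow> is_I \<alpha> M)"

end

theory Submission
  imports Defs
begin


lemma lam2_part:
  fixes s u md mc :: real
  assumes "0 \<le> s" "s \<le> u" "0 \<le> md" "md \<le> mc"
  shows "min u md * min s mc \<le> min s md * min u mc"
proof (cases "u \<le> md")
  case True
  then have "min u md = u" "min s md = s" "min s mc = s" "min u mc = u" using assms by auto
  then show ?thesis by (simp add: mult.commute)
next
  case False
  then have "min u md = md" "min u mc \<ge> md" using assms by auto
  have "md * min s mc \<le> min s md * min u mc"
  proof (cases "s \<le> md")
    case True
    then have "min s md = s" "min s mc = s" using assms by auto
    have "md * s \<le> min u mc * s" using \<open>min u mc \<ge> md\<close> assms by (intro mult_right_mono) auto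
    then show ?thesis using \<open>min s md = s\<close> \<open>min s mc = s\<close> by (simp add: mult.commute)
  next
    case f2: False
    then have "min s md = md" by simp
    have "min s mc \<le> min u mc" using assms by auto
    then show ?thesis using \<open>min s md = md\<close> assms by (simp add: mult_left_mono)
  qed
  then show ?thesis using \<open>min u md = md\<close> by simp
qed

lemma Y_part:
  fixes s u md :: real
  assumes "0 \<le> s" "s \<le> u" "0 \<le> md"
  shows "s * min u md \<le> u * min s md"
proof (cases "u \<le> md")
  case True then show ?thesis using assms by (simp add: min_def mult.commute)
next
  case False
  show ?thesis
  proof (cases "s \<le> md")
    case True
    then have "s * md \<le> s * u" using False assms by (intro mult_left_mono) auto
    then show ?thesis using True False by (simp add: min_def mult.commute)
  next
    case f2: False
    then have "s * md \<le> u * md" using assms by (intro mult_right_mono) auto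
    then show ?thesis using f2 False by (simp add: min_def)
  qed
qed

lemma cross_part:
  fixes s u md mc A B :: real
  assumes "0 \<le> s" "s \<le> u" "0 \<le> md" "md \<le> mc" "0 \<le> B" "B \<le> A" "B * mc \<le> A * md"
  shows "B * u * min s mc + A * s * min u md \<le> B * s * min u mc + A * u * min s md"
proof -
  have Y: "s * min u md \<le> u * min s md" using Y_part assms by blast
  have A0: "0 \<le> A" using assms by linarith
  consider "u \<le> mc" | "s \<le> mc" "mc < u" | "mc < s" by linarith
  then show ?thesis
  proof cases
    case 1
    then have e: "u * min s mc = s * min u mc" using assms by (simp add: min_def)
    have "A * (s * min u md) \<le> A * (u * min s md)"
      using Y A0 by (rule mult_left_mono)
    then show ?thesis by (simp add: mult.assoc e)
  next
    case 2
    then have e1: "min s mc = s" "min u mc = mc" "min u md = md" using assms by auto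
    show ?thesis
    proof (cases "s \<le> md")
      case True
      then have "min s md = s" by simp
      have "B * s * (u - mc) \<le> A * s * (u - md)"
        using assms 2 by (intro mult_mono) (auto intro: mult_right_mono)
      then show ?thesis using e1 \<open>min s md = s\<close> by (simp add: algebra_simps)
    next
      case False
      then have "min s md = md" by simp
      have "s * u \<le> mc * u" using 2 assms by (intro mult_right_mono) auto
      then have "s * (u - mc) \<le> mc * (u - s)" by (simp add: algebra_simps)
      then have "B * (s * (u - mc)) \<le> B * (mc * (u - s))" using assms by (intro mult_left_mono)
      also have "\<dots> \<le> A * md * (u - s)"
        using assms by (simp only: mult.assoc[symmetric]) (intro mult_right_mono, auto)
      finally show ?thesis using e1 \<open>min s md = md\<close> by (simp add: algebra_simps)
    qed
  next
    case 3
    then have "min s mc = mc" "min u mc = mc" "min u md = md" "min s md = md" using assms by auto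
    moreover have "B * mc * (u - s) \<le> A * md * (u - s)" using assms by (intro mult_right_mono) auto
    ultimately show ?thesis by (simp add: algebra_simps)
  qed
qed

lemma core_real:
  fixes s u md mc A B th l :: real
  assumes "0 \<le> s" "s \<le> u" "0 \<le> md" "md \<le> mc" "0 \<le> B" "B \<le> A" "B * mc \<le> A * md"
    "0 \<le> th" "0 \<le> l"
  shows "(th * B * u + l * min u md) * (th * A * s + l * min s mc) \<le> (th * B * s + l * min s md) * (th * A * u + l * min u mc)"
proof -
  have tl: "0 \<le> th * l" "0 \<le> l * l" using assms by auto
  have h1: "th * l * (B * u * min s mc + A * s * min u md) \<le> th * l * (B * s * min u mc + A * u * min s md)"
    using cross_part[OF assms(1-7)] tl(1) by (rule mult_left_mono)
  have h2: "l * l * (min u md * min s mc) \<le> l * l * (min s md * min u mc)"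
    using lam2_part[OF assms(1-4)] tl(2) by (rule mult_left_mono)
  have eq: "(th * B * s + l * min s md) * (th * A * u + l * min u mc) - (th * B * u + l * min u md) * (th * A * s + l * min s mc)
     = (th * l * (B * s * min u mc + A * u * min s md) - th * l * (B * u * min s mc + A * s * min u md))
       + (l * l * (min s md * min u mc) - l * l * (min u md * min s mc))"
    by (simp add: algebra_simps)
  show ?thesis using h1 h2 eq by linarith
qed

lemma key_real:
  fixes s t r md mc A B th l :: real
  assumes "0 \<le> s" "s \<le> t" "0 \<le> r" "0 \<le> md" "md \<le> mc" "0 \<le> B" "B \<le> A" "B * mc \<le> A * md"
    "0 \<le> th" "0 \<le> l"
  shows "(th * B * min r t + l * min (min r t) md) * (th * A * s + l * min s mc)
       \<le> (th * B * min r s + l * min (min r s) md) * (th * A * t + l * min t mc)"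
proof (cases "r \<le> s")
  case True
  then have e: "min r t = r" "min r s = r" using assms by auto
  have "0 \<le> th * B * r + l * min r md" using assms by auto
  moreover have "th * A * s + l * min s mc \<le> th * A * t + l * min t mc"
  proof -
    have "th * A * s \<le> th * A * t" using assms by (intro mult_left_mono) auto
    moreover have "l * min s mc \<le> l * min t mc" using assms by (intro mult_left_mono) auto
    ultimately show ?thesis by linarith
  qed
  ultimately show ?thesis unfolding e by (simp add: mult_left_mono)
next
  case False
  define u where "u = min r t"
  have su: "s \<le> u" "u \<le> t" using False assms u_def by auto
  have e: "min r s = s" using False by simp
  have "(th * B * u + l * min u md) * (th * A * s + l * min s mc) \<le> (th * B * s + l * min s md) * (th * A * u + l * min u mc)"
    by (rule core_real) (use assms su in auto)
  also have "\<dots> \<le> (th * B * s + l * min s md) * (th * A * t + l * min t mc)"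
  proof (rule mult_left_mono)
    have "th * A * u \<le> th * A * t" using assms su by (intro mult_left_mono) auto
    moreover have "l * min u mc \<le> l * min t mc" using assms su by (intro mult_left_mono) auto
    ultimately show "th * A * u + l * min u mc \<le> th * A * t + l * min t mc" by linarith
    show "0 \<le> th * B * s + l * min s md" using assms by auto
  qed
  finally show ?thesis unfolding e u_def[symmetric] using su by simp
qed

definition FF :: "real \<Rightarrow> real^'n \<Rightarrow> real" where
  "FF th w = th * (\<Prod>i\<in>UNIV. w $ i) + (1 - th) * Min (range (\<lambda>i. w $ i))"

definition vmin :: "real^'n \<Rightarrow> real^'n \<Rightarrow> real^'n" where
  "vmin z b = (\<chi> i. min (z $ i) (b $ i))"

lemma prod_min_key:
  fixes c d :: "'a \<Rightarrow> real"
  assumes "finite R" "R \<noteq> {}" "\<And>i. i \<in> R \<Longrightarrow> 0 \<le> d i" "\<And>i. i \<in> R \<Longrightarrow> d i \<le> c i"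
  shows "prod d R * Min (c ` R) \<le> prod c R * Min (d ` R)"
proof -
  have "Min (d ` R) \<in> d ` R" using assms by (intro Min_in) auto
  then obtain j where j: "j \<in> R" "Min (d ` R) = d j" by auto
  have pd: "prod d R = d j * prod d (R - {j})" using prod.remove[OF assms(1) j(1)] .
  have pc: "prod c R = c j * prod c (R - {j})" using prod.remove[OF assms(1) j(1)] .
  have le: "prod d (R - {j}) \<le> prod c (R - {j})"
    using assms by (intro prod_mono) auto
  have nn: "0 \<le> prod d (R - {j})" using assms by (intro prod_nonneg) auto
  have mc: "Min (c ` R) \<le> c j" using assms j by auto
  have mc0: "0 \<le> Min (c ` R)" using assms by (subst Min_ge_iff) (auto intro: order_trans)
  have "prod d R * Min (c ` R) = d j * (prod d (R - {j}) * Min (c ` R))" by (simp add: pd ac_simps)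
  also have "\<dots> \<le> d j * (prod c (R - {j}) * c j)"
    using assms j le nn mc mc0 by (intro mult_left_mono mult_mono) auto
  also have "\<dots> = prod c R * Min (d ` R)" by (simp add: pc j ac_simps)
  finally show ?thesis .
qed

lemma prod_split_k:
  fixes w :: "real^'n"
  shows "(\<Prod>i\<in>UNIV. w $ i) = w $ k * (\<Prod>i\<in>UNIV - {k}. w $ i)"
  using prod.remove[of UNIV k "\<lambda>i. w $ i"] by simp

lemma nonempty_rest:
  assumes "CARD('n) \<ge> 2"
  shows "(UNIV - {k::'n}) \<noteq> {}"
proof
  assume "UNIV - {k} = {}"
  then have "(UNIV::'n set) = {k}" by auto
  then have "card (UNIV::'n set) = card {k}" by (rule arg_cong)
  then have "card (UNIV::'n set) = 1" by simp
  then show False using assms by linarith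
qed

lemma min_split_k:
  fixes w :: "real^'n"
  assumes "CARD('n) \<ge> 2"
  shows "Min (range (\<lambda>i. w $ i)) = min (w $ k) (Min ((\<lambda>i. w $ i) ` (UNIV - {k})))"
proof -
  have ne: "UNIV - {k} \<noteq> {}" by (rule nonempty_rest[OF assms])
  have "range (\<lambda>i. w $ i) = insert (w $ k) ((\<lambda>i. w $ i) ` (UNIV - {k}))" by auto
  then show ?thesis using ne by (simp add: Min_insert)
qed

lemma one_coord:
  fixes a b z :: "real^'n"
  assumes card: "CARD('n) \<ge> 2" and th: "0 \<le> th" "th \<le> 1"
    and a0: "\<And>i. 0 \<le> a $ i" and z0: "\<And>i. 0 \<le> z $ i"
    and ab: "\<And>i. i \<noteq> k \<Longrightarrow> a $ i = b $ i" and abk: "a $ k \<le> b $ k"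
  shows "FF th (vmin z b) * FF th a \<le> FF th (vmin z a) * FF th b"
proof -
  define R where "R = UNIV - {k}"
  have R: "finite R" "R \<noteq> {}" using nonempty_rest[OF card] R_def by auto
  define A where "A = (\<Prod>i\<in>R. a $ i)"
  define B where "B = (\<Prod>i\<in>R. min (z $ i) (a $ i))"
  define mc where "mc = Min ((\<lambda>i. a $ i) ` R)"
  define md where "md = Min ((\<lambda>i. min (z $ i) (a $ i)) ` R)"
  have bR: "(\<Prod>i\<in>R. b $ i) = A" "Min ((\<lambda>i. b $ i) ` R) = mc"
    using ab unfolding A_def mc_def R_def
    by (auto intro!: prod.cong arg_cong[where f=Min] image_cong)
  have zbR: "(\<Prod>i\<in>R. vmin z b $ i) = B" "Min ((\<lambda>i. vmin z b $ i) ` R) = md"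
    using ab unfolding B_def md_def R_def vmin_def
    by (auto intro!: prod.cong arg_cong[where f=Min] image_cong)
  have zaR: "(\<Prod>i\<in>R. vmin z a $ i) = B" "Min ((\<lambda>i. vmin z a $ i) ` R) = md"
    unfolding B_def md_def R_def vmin_def by auto
  have Fe: "FF th w = th * (w $ k * (\<Prod>i\<in>R. w $ i)) + (1 - th) * min (w $ k) (Min ((\<lambda>i. w $ i) ` R))" for w
    unfolding FF_def R_def using prod_split_k[of w k] min_split_k[OF card, of w k] by simp
  have B0: "0 \<le> B" unfolding B_def using a0 z0 by (intro prod_nonneg) auto
  have BA: "B \<le> A" unfolding A_def B_def using a0 z0 by (intro prod_mono) auto
  have md0: "0 \<le> md" unfolding md_def using R a0 z0 by (subst Min_ge_iff) auto
  have mdmc: "md \<le> mc" unfolding mc_def md_def using R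
    by (subst Min_ge_iff) (auto intro: Min.coboundedI[THEN order_trans])
  have key: "B * mc \<le> A * md" unfolding A_def B_def mc_def md_def
    using prod_min_key[OF R, of "\<lambda>i. min (z $ i) (a $ i)" "\<lambda>i. a $ i"] a0 z0 by auto
  have ak0: "0 \<le> a $ k" using a0 by simp
  have "(th * B * min (z$k) (b$k) + (1-th) * min (min (z$k) (b$k)) md) * (th * A * (a$k) + (1-th) * min (a$k) mc)
       \<le> (th * B * min (z$k) (a$k) + (1-th) * min (min (z$k) (a$k)) md) * (th * A * (b$k) + (1-th) * min (b$k) mc)"
    by (rule key_real) (use ak0 abk z0 md0 mdmc B0 BA key th in auto)
  then show ?thesis
    unfolding Fe bR zbR zaR A_def[symmetric] mc_def[symmetric]
    by (simp add: vmin_def ac_simps)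
qed

lemma FF_mono:
  fixes a b :: "real^'n"
  assumes th: "0 \<le> th" "th \<le> 1" and a0: "\<And>i. 0 \<le> a $ i" and ab: "\<And>i. a $ i \<le> b $ i"
  shows "FF th a \<le> FF th b"
proof -
  have "(\<Prod>i\<in>UNIV. a $ i) \<le> (\<Prod>i\<in>UNIV. b $ i)" using a0 ab by (intro prod_mono) auto
  moreover have "Min (range (\<lambda>i. a $ i)) \<le> Min (range (\<lambda>i. b $ i))"
  proof (subst Min_ge_iff, simp_all, intro allI)
    fix x
    have "Min (range (\<lambda>i. a $ i)) \<le> a $ x" by (rule Min.coboundedI) auto
    then show "Min (range (($) a)) \<le> b $ x" using order_trans ab[of x] by blast
  qed
  ultimately show ?thesis unfolding FF_def using th
    by (intro add_mono mult_left_mono) auto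
qed

lemma FF_nonneg:
  fixes a :: "real^'n"
  assumes th: "0 \<le> th" "th \<le> 1" and a0: "\<And>i. 0 \<le> a $ i"
  shows "0 \<le> FF th a"
proof -
  have "0 \<le> (\<Prod>i\<in>UNIV. a $ i)" using a0 by (intro prod_nonneg) auto
  moreover have "0 \<le> Min (range (\<lambda>i. a $ i))" using a0 by (subst Min_ge_iff) auto
  ultimately show ?thesis unfolding FF_def using th by auto
qed

lemma chain:
  fixes a b z :: "real^'n"
  assumes card: "CARD('n) \<ge> 2" and th: "0 \<le> th" "th \<le> 1"
    and a0: "\<And>i. 0 \<le> a $ i" and z0: "\<And>i. 0 \<le> z $ i"
    and ab: "\<And>i. a $ i \<le> b $ i" and pos: "0 < FF th a"
  shows "FF th (vmin z b) * FF th a \<le> FF th (vmin z a) * FF th b"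
proof -
  define c where "c S = (\<chi> i. if i \<in> S then b $ i else a $ i)" for S
  have c0: "0 \<le> c S $ i" "a $ i \<le> c S $ i" for S i using a0 ab by (auto simp: c_def intro: order_trans)
  have "finite S \<Longrightarrow> FF th (vmin z (c S)) * FF th a \<le> FF th (vmin z a) * FF th (c S)" for S
  proof (induction S rule: finite_induct)
    case empty
    have "c {} = a" by (simp add: c_def vec_eq_iff)
    then show ?case by simp
  next
    case (insert k S)
    let ?c = "c S" and ?d = "c (insert k S)"
    have step: "FF th (vmin z ?d) * FF th ?c \<le> FF th (vmin z ?c) * FF th ?d"
      by (rule one_coord[OF card th, where k=k]) (use c0 insert.hyps ab z0 in \<open>auto simp: c_def\<close>)
    have Fc: "FF th a \<le> FF th ?c" by (rule FF_mono[OF th a0]) (use c0 in auto)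
    have Fd: "0 \<le> FF th ?d" by (rule FF_nonneg[OF th]) (use c0 in auto)
    have Fa: "0 \<le> FF th a" using pos by simp
    have "(FF th (vmin z ?d) * FF th a) * FF th ?c = (FF th (vmin z ?d) * FF th ?c) * FF th a"
      by (simp add: ac_simps)
    also have "\<dots> \<le> (FF th (vmin z ?c) * FF th ?d) * FF th a"
      using step Fa by (rule mult_right_mono)
    also have "\<dots> = (FF th (vmin z ?c) * FF th a) * FF th ?d" by (simp add: ac_simps)
    also have "\<dots> \<le> (FF th (vmin z a) * FF th ?c) * FF th ?d"
      using insert.IH Fd by (rule mult_right_mono)
    also have "\<dots> = (FF th (vmin z a) * FF th ?d) * FF th ?c" by (simp add: ac_simps)
    finally show ?case using Fc pos by (simp add: mult_le_cancel_right)
  qed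
  moreover have "c UNIV = b" by (simp add: c_def vec_eq_iff)
  ultimately show ?thesis by (metis finite_class.finite_UNIV)
qed



definition mix :: "real \<Rightarrow> 'a measure \<Rightarrow> 'a measure \<Rightarrow> 'a measure" where
  "mix p M N = measure_of (space M) (sets M) (\<lambda>A. ennreal p * emeasure M A + ennreal (1 - p) * emeasure N A)"

lemma sets_mix[simp]: "sets (mix p M N) = sets M"
  by (simp add: mix_def)

lemma space_mix[simp]: "space (mix p M N) = space M"
  by (simp add: mix_def)

lemma emeasure_mix:
  assumes N: "sets N = sets M" and A: "A \<in> sets M"
  shows "emeasure (mix p M N) A = ennreal p * emeasure M A + ennreal (1 - p) * emeasure N A"
  (is "_ = ?\<mu> A")
  unfolding mix_def
proof (rule emeasure_measure_of_sigma)
  show "sigma_algebra (space M) (sets M)" ..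
  show "positive (sets M) ?\<mu>" using N by (simp add: positive_def)
  show "countably_additive (sets M) ?\<mu>"
  proof (rule countably_additiveI)
    fix A :: "nat \<Rightarrow> _"  assume *: "range A \<subseteq> sets M" "disjoint_family A"
    have *: "range A \<subseteq> sets N" using * N by simp_all
    have "(\<Sum>i. ?\<mu> (A i)) = (\<Sum>i. ennreal p * emeasure M (A i)) + (\<Sum>i. ennreal (1 - p) * emeasure N (A i))"
      by (rule suminf_add[symmetric]) auto
    also have "\<dots> = ennreal p * (\<Sum>i. emeasure M (A i)) + ennreal (1 - p) * (\<Sum>i. emeasure N (A i))"
      by simp
    also have "\<dots> = ?\<mu> (\<Union>i. A i)" using * \<open>range A \<subseteq> sets M\<close> \<open>disjoint_family A\<close>
      by (simp add: suminf_emeasure)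
    finally show "(\<Sum>i. ?\<mu> (A i)) = ?\<mu> (\<Union>i. A i)" .
  qed
qed (fact A)

lemma mix_prob:
  assumes "prob_space M" "prob_space N" "sets N = sets M" "0 \<le> p" "p \<le> 1"
  shows "prob_space (mix p M N)"
    and "A \<in> sets M \<Longrightarrow> measure (mix p M N) A = p * measure M A + (1 - p) * measure N A"
proof -
  interpret M: prob_space M by fact
  interpret N: prob_space N by fact
  have sp: "space N = space M" using assms(3) by (rule sets_eq_imp_space_eq)
  have e: "emeasure (mix p M N) A = ennreal (p * measure M A + (1 - p) * measure N A)" if "A \<in> sets M" for A
  proof -
    have NA: "A \<in> sets N" using that assms(3) by simp
    have "emeasure (mix p M N) A = ennreal p * ennreal (measure M A) + ennreal (1 - p) * ennreal (measure N A)"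
      using emeasure_mix[OF assms(3) that] M.emeasure_eq_measure[of A] N.emeasure_eq_measure[of A] by simp
    also have "\<dots> = ennreal (p * measure M A) + ennreal ((1 - p) * measure N A)"
      using assms(4,5) by (simp only: ennreal_mult[symmetric] measure_nonneg)
    also have "\<dots> = ennreal (p * measure M A + (1 - p) * measure N A)"
      using assms(4,5) by (intro ennreal_plus[symmetric]) auto
    finally show ?thesis .
  qed
  show "prob_space (mix p M N)"
    by (rule prob_spaceI) (simp add: e N.prob_space[unfolded sp] M.prob_space)
  show "A \<in> sets M \<Longrightarrow> measure (mix p M N) A = p * measure M A + (1 - p) * measure N A"
    using e assms by (intro measure_eq_emeasure_eq_ennreal) auto
qed

lemma meas_between:
  fixes l u :: "real^'n" and T :: "(real^'n) set"
  assumes lu: "\<And>i. l $ i \<le> u $ i" and sub: "box l u \<subseteq> T" "T \<subseteq> cbox l u" and T: "T \<in> sets lborel"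
  shows "measure lborel T = (\<Prod>i\<in>UNIV. u $ i - l $ i)"
proof -
  have "l \<in> cbox l u" using lu by (simp add: mem_box_cart)
  then have ne: "cbox l u \<noteq> {}" by auto
  have c: "measure lborel (cbox l u) = (\<Prod>i\<in>UNIV. u $ i - l $ i)"
    using content_cbox_cart[OF ne] by simp
  have b: "measure lborel (box l u) = measure lborel (cbox l u)"
    by (simp add: measure_lborel_box_eq measure_lborel_cbox_eq)
  have "measure lborel T \<le> measure lborel (cbox l u)"
    by (rule measure_mono_fmeasurable[OF sub(2) T]) auto
  moreover have "measure lborel (box l u) \<le> measure lborel T"
    by (rule measure_mono_fmeasurable[OF sub(1)]) (auto intro!: fmeasurableI2[OF _ sub(2) T])
  ultimately show ?thesis using b c by linarith
qed

lemma meas_between1: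
  fixes l u :: real and T :: "real set"
  assumes lu: "l \<le> u" and sub: "{l<..<u} \<subseteq> T" "T \<subseteq> {l..u}" and T: "T \<in> sets lborel"
  shows "measure lborel T = u - l"
proof -
  have fm: "{l..u} \<in> fmeasurable lborel" using fmeasurable_cbox[of l u] by (simp add: cbox_interval)
  have "measure lborel T \<le> measure lborel {l..u}"
    by (rule measure_mono_fmeasurable[OF sub(2) T fm])
  moreover have "measure lborel {l<..<u} \<le> measure lborel T"
    by (rule measure_mono_fmeasurable[OF sub(1)]) (auto intro!: fmeasurableI2[OF fm sub(2) T])
  ultimately show ?thesis using lu by simp
qed

definition clamp :: "real \<Rightarrow> real" where "clamp t = max 0 (min 1 t)"

definition M1 :: "(real^'n) measure" where "M1 = uniform_measure lborel (cbox 0 1)"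

lemma cube_meas: "emeasure lborel (cbox (0::real^'n) 1) = 1" "measure lborel (cbox (0::real^'n) 1) = 1"
proof -
  have "(0::real^'n) \<in> cbox 0 1" by (simp add: mem_box_cart)
  then have ne: "cbox (0::real^'n) 1 \<noteq> {}" by auto
  show m: "measure lborel (cbox (0::real^'n) 1) = 1"
    using content_cbox_cart[OF ne] by simp
  show "emeasure lborel (cbox (0::real^'n) 1) = 1"
    using emeasure_eq_measure2[OF fmeasurable_cbox[of "0::real^'n" 1]] m by simp
qed

lemma M1_facts:
  shows "prob_space (M1::(real^'n) measure)" "sets (M1::(real^'n) measure) = sets borel"
    and "S \<in> sets borel \<Longrightarrow> measure (M1::(real^'n) measure) S = measure lborel (cbox 0 1 \<inter> S)"
proof -
  show "prob_space (M1::(real^'n) measure)" unfolding M1_def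
    by (rule prob_space_uniform_measure) (simp_all add: cube_meas)
  show "sets (M1::(real^'n) measure) = sets borel" unfolding M1_def by simp
  show "S \<in> sets borel \<Longrightarrow> measure (M1::(real^'n) measure) S = measure lborel (cbox 0 1 \<inter> S)"
    unfolding M1_def by (subst measure_uniform_measure) (simp_all add: cube_meas)
qed

lemma set_le_borel: "{y::real^'n. \<forall>i. y$i \<le> x$i} \<in> sets borel"
  by (intro borel_closed) (auto intro!: closed_Collect_le continuous_intros simp: Collect_all_eq)
lemma set_gt_borel: "{y::real^'n. \<forall>i. x$i < y$i} \<in> sets borel"
  by (intro borel_open) (auto intro!: open_Collect_less continuous_intros simp: Collect_all_eq)
lemma set_lt_borel: "{y::real^'n. \<forall>i. y$i < x$i} \<in> sets borel"
  by (intro borel_open) (auto intro!: open_Collect_less continuous_intros simp: Collect_all_eq)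

lemma box_sub_pw:
  fixes l u :: "real^'n"
  assumes "\<And>i t. l$i < t \<Longrightarrow> t < u$i \<Longrightarrow> P i t"
  shows "box l u \<subseteq> {y. \<forall>i. P i (y$i)}"
  using assms by (auto simp: mem_box_cart)

lemma cbox_sup_pw:
  fixes l u :: "real^'n"
  assumes "\<And>i t. P i t \<Longrightarrow> l$i \<le> t \<and> t \<le> u$i"
  shows "{y. \<forall>i. P i (y$i)} \<subseteq> cbox l u"
  using assms by (auto simp: mem_box_cart)

lemma cube_Int_pw: "cbox 0 1 \<inter> {y::real^'n. \<forall>i. Q i (y$i)} = {y. \<forall>i. 0 \<le> y$i \<and> y$i \<le> 1 \<and> Q i (y$i)}"
  by (auto simp: mem_box_cart)

lemma M1_pw:
  fixes l u :: "real^'n"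
  assumes lu: "\<And>i. l$i \<le> u$i" and Sb: "{y::real^'n. \<forall>i. Q i (y$i)} \<in> sets borel"
    and a: "\<And>i t. l$i < t \<Longrightarrow> t < u$i \<Longrightarrow> 0 \<le> t \<and> t \<le> 1 \<and> Q i t"
    and b: "\<And>i t. 0 \<le> t \<Longrightarrow> t \<le> 1 \<Longrightarrow> Q i t \<Longrightarrow> l$i \<le> t \<and> t \<le> u$i"
  shows "measure (M1::(real^'n) measure) {y. \<forall>i. Q i (y$i)} = (\<Prod>i\<in>UNIV. u $ i - l $ i)"
proof -
  have "measure lborel (cbox 0 1 \<inter> {y::real^'n. \<forall>i. Q i (y$i)}) = (\<Prod>i\<in>UNIV. u $ i - l $ i)"
    unfolding cube_Int_pw
  proof (rule meas_between[OF lu])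
    show "box l u \<subseteq> {y. \<forall>i. 0 \<le> y$i \<and> y$i \<le> 1 \<and> Q i (y$i)}" by (rule box_sub_pw) (rule a)
    show "{y. \<forall>i. 0 \<le> y$i \<and> y$i \<le> 1 \<and> Q i (y$i)} \<subseteq> cbox l u" by (rule cbox_sup_pw) (use b in auto)
    have "cbox 0 1 \<inter> {y::real^'n. \<forall>i. Q i (y$i)} \<in> sets lborel" using Sb by auto
    then show "{y. \<forall>i. 0 \<le> y$i \<and> y$i \<le> 1 \<and> Q i (y$i)} \<in> sets lborel" unfolding cube_Int_pw .
  qed
  then show ?thesis using Sb by (simp add: M1_facts)
qed

lemma M1_le: "measure (M1::(real^'n) measure) {y. \<forall>i. y$i \<le> x$i} = (\<Prod>i\<in>UNIV. clamp (x$i))"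
proof -
  have "measure (M1::(real^'n) measure) {y. \<forall>i. y$i \<le> x$i} = (\<Prod>i\<in>UNIV. (\<chi> i. clamp (x$i)) $ i - (0::real^'n) $ i)"
    by (rule M1_pw) (use set_le_borel[of x] in \<open>auto simp: clamp_def\<close>)
  then show ?thesis by simp
qed

lemma M1_lt: "measure (M1::(real^'n) measure) {y. \<forall>i. y$i < x$i} = (\<Prod>i\<in>UNIV. clamp (x$i))"
proof -
  have "measure (M1::(real^'n) measure) {y. \<forall>i. y$i < x$i} = (\<Prod>i\<in>UNIV. (\<chi> i. clamp (x$i)) $ i - (0::real^'n) $ i)"
    by (rule M1_pw) (use set_lt_borel[of x] in \<open>auto simp: clamp_def\<close>)
  then show ?thesis by simp
qed

lemma M1_gt: "measure (M1::(real^'n) measure) {y. \<forall>i. x$i < y$i} = (\<Prod>i\<in>UNIV. 1 - clamp (x$i))"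
proof -
  have "measure (M1::(real^'n) measure) {y. \<forall>i. x$i < y$i} = (\<Prod>i\<in>UNIV. (1::real^'n) $ i - (\<chi> i. clamp (x$i)) $ i)"
    by (rule M1_pw) (use set_gt_borel[of x] in \<open>auto simp: clamp_def\<close>)
  then show ?thesis by simp
qed

definition M2 :: "(real^'n) measure" where
  "M2 = distr (uniform_measure lborel {0..1::real}) borel (\<lambda>t. \<chi> i. t)"

lemma diag_meas: "(\<lambda>t::real. (\<chi> i. t)::real^'n) \<in> measurable (uniform_measure lborel {0..1::real}) borel"
proof -
  have "(\<lambda>t::real. (\<chi> i. t)::real^'n) \<in> borel_measurable borel"
    by (intro borel_measurable_continuous_onI continuous_intros)
  then show ?thesis by (simp add: measurable_def)
qed

lemma M2_facts:
  shows "prob_space (M2::(real^'n) measure)" "sets (M2::(real^'n) measure) = sets borel"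
    and "S \<in> sets borel \<Longrightarrow> measure (M2::(real^'n) measure) S = measure lborel ({0..1} \<inter> ((\<lambda>t. \<chi> i. t) -` S))"
proof -
  have pu: "prob_space (uniform_measure lborel {0..1::real})"
    by (rule prob_space_uniform_measure) simp_all
  show "prob_space (M2::(real^'n) measure)" unfolding M2_def
    by (rule prob_space.prob_space_distr[OF pu diag_meas])
  show "sets (M2::(real^'n) measure) = sets borel" unfolding M2_def by simp
  assume S: "S \<in> sets borel"
  have "measure (M2::(real^'n) measure) S = measure (uniform_measure lborel {0..1::real}) ((\<lambda>t. \<chi> i. t) -` S)"
    unfolding M2_def using S by (subst measure_distr[OF diag_meas]) simp_all
  also have "\<dots> = measure lborel ({0..1} \<inter> ((\<lambda>t. \<chi> i. t) -` S))"
    using diag_meas S by (subst measure_uniform_measure) (auto simp: measurable_def)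
  finally show "measure (M2::(real^'n) measure) S = measure lborel ({0..1} \<inter> ((\<lambda>t. \<chi> i. t) -` S))" .
qed

lemma M2_pw:
  assumes lu: "0 \<le> l" "l \<le> u" "u \<le> 1" and Sb: "{y::real^'n. \<forall>i. Q i (y$i)} \<in> sets borel"
    and a: "\<And>t. l < t \<Longrightarrow> t < u \<Longrightarrow> \<forall>i. Q i t"
    and b: "\<And>t. 0 \<le> t \<Longrightarrow> t \<le> 1 \<Longrightarrow> \<forall>i. Q i t \<Longrightarrow> l \<le> t \<and> t \<le> u"
  shows "measure (M2::(real^'n) measure) {y. \<forall>i. Q i (y$i)} = u - l"
proof -
  have pre: "(\<lambda>t. (\<chi> i. t)::real^'n) -` {y::real^'n. \<forall>i. Q i (y$i)} = {t. \<forall>i. Q i t}" by auto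
  have mb: "{t. \<forall>i::'n. Q i t} \<in> sets lborel"
    using measurable_sets[OF diag_meas Sb] pre by simp
  have "measure lborel ({0..1} \<inter> {t. \<forall>i::'n. Q i t}) = u - l"
    by (rule meas_between1) (use lu a b mb in \<open>auto\<close>)
  then show ?thesis using Sb by (simp add: M2_facts pre)
qed

lemma clamp_mono: "a \<le> b \<Longrightarrow> clamp a \<le> clamp b" by (auto simp: clamp_def)
lemma clamp_lt: "0 < t \<Longrightarrow> t < clamp m \<Longrightarrow> t < m" by (auto simp: clamp_def)
lemma clamp_gt: "t < 1 \<Longrightarrow> clamp m < t \<Longrightarrow> m < t" by (auto simp: clamp_def)

lemma Min_range_facts:
  fixes x :: "real^'n"
  shows "\<And>i. Min (range (\<lambda>i. x$i)) \<le> x$i" "\<exists>j. x$j = Min (range (\<lambda>i. x$i))"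
    "\<And>i. x$i \<le> Max (range (\<lambda>i. x$i))" "\<exists>j. x$j = Max (range (\<lambda>i. x$i))"
proof -
  show "\<And>i. Min (range (\<lambda>i. x$i)) \<le> x$i" by (rule Min_le) auto
  show "\<And>i. x$i \<le> Max (range (\<lambda>i. x$i))" by (rule Max_ge) auto
  have "Min (range (\<lambda>i. x$i)) \<in> range (\<lambda>i. x$i)" by (rule Min_in) auto
  then show "\<exists>j. x$j = Min (range (\<lambda>i. x$i))" by (metis (mono_tags) rangeE)
  have "Max (range (\<lambda>i. x$i)) \<in> range (\<lambda>i. x$i)" by (rule Max_in) auto
  then show "\<exists>j. x$j = Max (range (\<lambda>i. x$i))" by (metis (mono_tags) rangeE)
qed

lemma Min_clamp: "Min (range (\<lambda>i. clamp (x$i))) = clamp (Min (range (\<lambda>i. x$i)))"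
proof (rule Min_eqI)
  obtain j where j: "x$j = Min (range (\<lambda>i. x$i))" using Min_range_facts(2) by blast
  show "clamp (Min (range (\<lambda>i. x$i))) \<in> range (\<lambda>i. clamp (x$i))" using j[symmetric] by auto
  show "\<And>y. y \<in> range (\<lambda>i. clamp (x$i)) \<Longrightarrow> clamp (Min (range (\<lambda>i. x$i))) \<le> y"
    using Min_range_facts(1)[of x] by (auto intro: clamp_mono)
qed auto

lemma Min_clamp2: "Min (range (\<lambda>i. 1 - clamp (x$i))) = 1 - clamp (Max (range (\<lambda>i. x$i)))"
proof (rule Min_eqI)
  obtain j where j: "x$j = Max (range (\<lambda>i. x$i))" using Min_range_facts(4) by blast
  show "1 - clamp (Max (range (\<lambda>i. x$i))) \<in> range (\<lambda>i. 1 - clamp (x$i))" using j[symmetric] by auto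
  show "\<And>y. y \<in> range (\<lambda>i. 1 - clamp (x$i)) \<Longrightarrow> 1 - clamp (Max (range (\<lambda>i. x$i))) \<le> y"
    using clamp_mono[OF Min_range_facts(3)[of x]] by auto
qed auto

lemma M2_le: "measure (M2::(real^'n) measure) {y. \<forall>i. y$i \<le> x$i} = Min (range (\<lambda>i. clamp (x$i)))"
proof -
  define m where "m = Min (range (\<lambda>i. x$i))"
  obtain j where j: "x$j = m" using Min_range_facts(2) m_def by metis
  have mi: "\<And>i. m \<le> x$i" using Min_range_facts(1) m_def by metis
  have "measure (M2::(real^'n) measure) {y. \<forall>i. y$i \<le> x$i} = clamp m - 0"
  proof (rule M2_pw)
    show "\<And>t. 0 < t \<Longrightarrow> t < clamp m \<Longrightarrow> \<forall>i. t \<le> x$i"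
      using mi clamp_lt by (meson less_le_trans less_imp_le)
    show "0 \<le> t \<and> t \<le> clamp m" if h: "0 \<le> t" "t \<le> 1" "\<forall>i. t \<le> x$i" for t
    proof -
      have "t \<le> m" using h(3) j by metis
      then show ?thesis using h by (auto simp: clamp_def)
    qed
  qed (use set_le_borel[of x] in \<open>auto simp: clamp_def\<close>)
  then show ?thesis by (simp add: Min_clamp m_def)
qed

lemma M2_lt: "measure (M2::(real^'n) measure) {y. \<forall>i. y$i < x$i} = Min (range (\<lambda>i. clamp (x$i)))"
proof -
  define m where "m = Min (range (\<lambda>i. x$i))"
  obtain j where j: "x$j = m" using Min_range_facts(2) m_def by metis
  have mi: "\<And>i. m \<le> x$i" using Min_range_facts(1) m_def by metis
  have "measure (M2::(real^'n) measure) {y. \<forall>i. y$i < x$i} = clamp m - 0"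
  proof (rule M2_pw)
    show "\<And>t. 0 < t \<Longrightarrow> t < clamp m \<Longrightarrow> \<forall>i. t < x$i"
      using mi clamp_lt by (meson less_le_trans)
    show "0 \<le> t \<and> t \<le> clamp m" if h: "0 \<le> t" "t \<le> 1" "\<forall>i. t < x$i" for t
    proof -
      have "t \<le> m" using h(3) j by (metis less_imp_le)
      then show ?thesis using h by (auto simp: clamp_def)
    qed
  qed (use set_lt_borel[of x] in \<open>auto simp: clamp_def\<close>)
  then show ?thesis by (simp add: Min_clamp m_def)
qed

lemma M2_gt: "measure (M2::(real^'n) measure) {y. \<forall>i. x$i < y$i} = Min (range (\<lambda>i. 1 - clamp (x$i)))"
proof -
  define m where "m = Max (range (\<lambda>i. x$i))"
  obtain j where j: "x$j = m" using Min_range_facts(4) m_def by metis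
  have mi: "\<And>i. x$i \<le> m" using Min_range_facts(3) m_def by metis
  have "measure (M2::(real^'n) measure) {y. \<forall>i. x$i < y$i} = 1 - clamp m"
  proof (rule M2_pw)
    show "\<And>t. clamp m < t \<Longrightarrow> t < 1 \<Longrightarrow> \<forall>i. x$i < t"
      using mi clamp_gt by (meson le_less_trans)
    show "clamp m \<le> t \<and> t \<le> 1" if h: "0 \<le> t" "t \<le> 1" "\<forall>i. x$i < t" for t
    proof -
      have "m \<le> t" using h(3) j by (metis less_imp_le)
      then show ?thesis using h by (auto simp: clamp_def)
    qed
  qed (use set_gt_borel[of x] in \<open>auto simp: clamp_def\<close>)
  then show ?thesis by (simp add: Min_clamp2 m_def)
qed

definition M0 :: "real \<Rightarrow> (real^'n) measure" where "M0 th = mix th M1 M2"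

lemma M0_facts:
  assumes "0 \<le> th" "th \<le> 1"
  shows "prob_space (M0 th :: (real^'n) measure)" "sets (M0 th :: (real^'n) measure) = sets borel"
    and "S \<in> sets borel \<Longrightarrow> measure (M0 th :: (real^'n) measure) S = th * measure M1 S + (1 - th) * measure M2 S"
proof -
  have s: "sets (M2::(real^'n) measure) = sets M1" by (simp add: M1_facts M2_facts)
  show "prob_space (M0 th :: (real^'n) measure)" unfolding M0_def
    by (rule mix_prob(1)[OF M1_facts(1) M2_facts(1) s assms])
  show "sets (M0 th :: (real^'n) measure) = sets borel" by (simp add: M0_def M1_facts)
  show "S \<in> sets borel \<Longrightarrow> measure (M0 th :: (real^'n) measure) S = th * measure M1 S + (1 - th) * measure M2 S"
    unfolding M0_def by (rule mix_prob(2)[OF M1_facts(1) M2_facts(1) s assms]) (simp add: M1_facts)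
qed

lemma M0_le:
  assumes "0 \<le> th" "th \<le> 1"
  shows "measure (M0 th :: (real^'n) measure) {y. \<forall>i. y$i \<le> x$i} = FF th (\<chi> i. clamp (x$i))"
  using assms by (simp add: M0_facts set_le_borel M1_le M2_le FF_def)

lemma M0_lt:
  assumes "0 \<le> th" "th \<le> 1"
  shows "measure (M0 th :: (real^'n) measure) {y. \<forall>i. y$i < x$i} = FF th (\<chi> i. clamp (x$i))"
  using assms by (simp add: M0_facts set_lt_borel M1_lt M2_lt FF_def)

lemma M0_gt:
  assumes "0 \<le> th" "th \<le> 1"
  shows "measure (M0 th :: (real^'n) measure) {y. \<forall>i. x$i < y$i} = FF th (\<chi> i. 1 - clamp (x$i))"
  using assms by (simp add: M0_facts set_gt_borel M1_gt M2_gt FF_def)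

lemma copula_unique:
  fixes M :: "(real^'n) measure"
  assumes th: "0 \<le> th" "th \<le> 1" and h: "has_copula_df (FF th) M"
  shows "M = M0 th"
proof -
  let ?E = "range (\<lambda>a::real^'n. {y. \<forall>i. y$i \<le> a$i})"
  have PM: "prob_space M" and sM: "sets M = sets borel"
    and cdf: "\<And>x. measure M {y. \<forall>i. y $ i \<le> x $ i} = FF th (\<chi> i. max 0 (min 1 (x $ i)))"
    using h unfolding has_copula_df_def by auto
  interpret P: prob_space M by (rule PM)
  interpret Q: prob_space "M0 th :: (real^'n) measure" by (rule M0_facts(1)[OF th])
  have atM: "{..a} = {y. \<forall>i. y$i \<le> a$i}" for a :: "real^'n"
    by (auto simp: less_eq_vec_def)
  have sig: "sets (borel :: (real^'n) measure) = sigma_sets UNIV ?E"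
  proof -
    have "sets (borel :: (real^'n) measure) = sets (sigma UNIV (range (\<lambda>a::real^'n. {..a})))"
      by (subst borel_eq_atMost) (rule refl)
    also have "\<dots> = sigma_sets UNIV (range (\<lambda>a::real^'n. {..a}))" by (rule sets_measure_of) auto
    also have "range (\<lambda>a::real^'n. {..a}) = ?E" by (simp add: atM)
    finally show ?thesis .
  qed
  show ?thesis
  proof (rule measure_eqI_generator_eq[where E = ?E and \<Omega> = UNIV and A = "\<lambda>n. {y. \<forall>i. y$i \<le> (\<chi> i. real n)$i}"])
    show "Int_stable ?E"
    proof (rule Int_stableI)
      fix A B assume "A \<in> ?E" "B \<in> ?E"
      then obtain a b where ab: "A = {y. \<forall>i. y$i \<le> a$i}" "B = {y. \<forall>i. y$i \<le> b$i}" by auto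
      have "A \<inter> B = {y. \<forall>i. y$i \<le> (\<chi> i. min (a$i) (b$i))$i}" by (auto simp: ab)
      then show "A \<inter> B \<in> ?E" by blast
    qed
    show "?E \<subseteq> Pow UNIV" by auto
    show "sets M = sigma_sets UNIV ?E" using sM sig by simp
    show "sets (M0 th) = sigma_sets UNIV ?E" unfolding M0_facts(2)[OF th] by (rule sig)
    show "range (\<lambda>n. {y. \<forall>i. y$i \<le> (\<chi> i. real n)$i}) \<subseteq> ?E" by blast
    show "(\<Union>n. {y::real^'n. \<forall>i. y$i \<le> (\<chi> i. real n)$i}) = UNIV"
    proof (rule set_eqI, rule iffI)
      fix y :: "real^'n"
      obtain n where n: "Max (range (\<lambda>i. y$i)) < real n" using reals_Archimedean2 by blast
      have "\<forall>i. y$i \<le> (\<chi> i. real n)$i" using Min_range_facts(3)[of y] n by (auto intro: order_trans less_imp_le)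
      then show "y \<in> (\<Union>n. {y::real^'n. \<forall>i. y$i \<le> (\<chi> i. real n)$i})" by blast
    qed auto
    show "emeasure M (A n) \<noteq> \<infinity>" for A n by (simp add: P.emeasure_eq_measure)
    fix X assume "X \<in> ?E"
    then obtain a where a: "X = {y. \<forall>i. y$i \<le> a$i}" by auto
    have "measure M X = measure (M0 th) X"
      unfolding a cdf M0_le[OF th] by (simp add: clamp_def)
    then show "emeasure M X = emeasure (M0 th) X"
      by (simp add: P.emeasure_eq_measure Q.emeasure_eq_measure)
  qed
qed

lemma is_I_from:
  fixes M :: "(real^'n) measure" and \<alpha> :: "real^'n" and W :: "real^'n \<Rightarrow> real^'n"
  assumes card: "CARD('n) \<ge> 2" and th: "0 \<le> th" "th \<le> 1"
    and meas: "\<And>x. measure M (upper_orthant \<alpha> x) = FF th (W x)"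
    and int: "\<And>x y. upper_orthant \<alpha> x \<inter> upper_orthant \<alpha> y = upper_orthant \<alpha> (\<chi> i. max (x$i) (y$i))"
    and Wmax: "\<And>x y. W (\<chi> i. max (x$i) (y$i)) = vmin (W x) (W y)"
    and W0: "\<And>x i. 0 \<le> W x $ i"
    and Wmono: "\<And>x y i. (\<forall>i. x$i \<le> y$i) \<Longrightarrow> W y $ i \<le> W x $ i"
  shows "is_I \<alpha> M"
  unfolding is_I_def cond_prob_def
proof (intro allI impI)
  fix x x' x'' :: "real^'n"
  assume le: "\<forall>i. x' $ i \<le> x'' $ i" and pos: "0 < measure M (upper_orthant \<alpha> x'')"
  define a where "a = W x''"
  define b where "b = W x'"
  define z where "z = W x"
  have Fa: "0 < FF th a" using pos meas a_def by simp
  have ab: "\<And>i. a$i \<le> b$i" using Wmono[OF le] a_def b_def by simp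
  have Fb: "FF th a \<le> FF th b" by (rule FF_mono[OF th]) (use W0 a_def ab in auto)
  have ch: "FF th (vmin z b) * FF th a \<le> FF th (vmin z a) * FF th b"
    by (rule chain[OF card th]) (use W0 a_def z_def ab Fa in auto)
  have "FF th (vmin z b) / FF th b \<le> FF th (vmin z a) / FF th a"
    using ch Fa Fb by (simp add: divide_le_eq le_divide_eq field_simps)
  then show "measure M (upper_orthant \<alpha> x \<inter> upper_orthant \<alpha> x') / measure M (upper_orthant \<alpha> x')
         \<le> measure M (upper_orthant \<alpha> x \<inter> upper_orthant \<alpha> x'') / measure M (upper_orthant \<alpha> x'')"
    unfolding int meas Wmax a_def b_def z_def .
qed

lemma is_I_M0:
  assumes card: "CARD('n) \<ge> 2" and th: "0 \<le> th" "th \<le> 1"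
  shows "is_I (\<chi> i. 1) (M0 th :: (real^'n) measure)" "is_I (\<chi> i. -1) (M0 th :: (real^'n) measure)"
proof -
  have u1: "upper_orthant (\<chi> i. 1) x = {y::real^'n. \<forall>i. x$i < y$i}" for x
    by (simp add: upper_orthant_def)
  show "is_I (\<chi> i. 1) (M0 th :: (real^'n) measure)"
  proof (rule is_I_from[OF card th, where W = "\<lambda>x. \<chi> i. 1 - clamp (x$i)"])
    show "\<And>x. measure (M0 th :: (real^'n) measure) (upper_orthant (\<chi> i. 1) x) = FF th (\<chi> i. 1 - clamp (x $ i))"
      unfolding u1 by (rule M0_gt[OF th])
    show "\<And>(x::real^'n) y. upper_orthant (\<chi> i. 1) x \<inter> upper_orthant (\<chi> i. 1) y = upper_orthant (\<chi> i. 1) (\<chi> i. max (x $ i) (y $ i))"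
      unfolding u1 by auto
    show "\<And>x y. (\<chi> i. 1 - clamp ((\<chi> i. max (x $ i) (y $ i)) $ i)) = vmin (\<chi> i. 1 - clamp (x $ i)) (\<chi> i. 1 - clamp (y $ i))"
      by (auto simp: vmin_def vec_eq_iff clamp_def max_def min_def)
    show "\<And>x i. 0 \<le> (\<chi> i. 1 - clamp (x $ i)) $ i" by (auto simp: clamp_def)
    show "\<And>x y i. \<forall>i. x $ i \<le> y $ i \<Longrightarrow> (\<chi> i. 1 - clamp (y $ i)) $ i \<le> (\<chi> i. 1 - clamp (x $ i)) $ i"
      by (simp add: clamp_mono)
  qed
  have u2: "upper_orthant (\<chi> i. -1) x = {y::real^'n. \<forall>i. y$i < (\<chi> i. - x$i)$i}" for x
  proof -
    have "\<And>y::real^'n. (\<forall>i. (\<chi> i. -1::real^'n) $ i * y $ i > x $ i) \<longleftrightarrow> (\<forall>i. y$i < (\<chi> i. - x$i)$i)"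
      by (simp, meson less_minus_iff)
    then show ?thesis by (simp add: upper_orthant_def)
  qed
  show "is_I (\<chi> i. -1) (M0 th :: (real^'n) measure)"
  proof (rule is_I_from[OF card th, where W = "\<lambda>x. \<chi> i. clamp (- x$i)"])
    show "\<And>x. measure (M0 th :: (real^'n) measure) (upper_orthant (\<chi> i. -1) x) = FF th (\<chi> i. clamp (- x $ i))"
      unfolding u2 by (subst M0_lt[OF th]) simp
    show "\<And>(x::real^'n) y. upper_orthant (\<chi> i. -1) x \<inter> upper_orthant (\<chi> i. -1) y = upper_orthant (\<chi> i. -1) (\<chi> i. max (x $ i) (y $ i))"
      unfolding u2 by (auto simp: minus_max_eq_min)
    show "\<And>x y. (\<chi> i. clamp (- (\<chi> i. max (x $ i) (y $ i)) $ i)) = vmin (\<chi> i. clamp (- x $ i)) (\<chi> i. clamp (- y $ i))"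
      by (auto simp: vmin_def vec_eq_iff clamp_def max_def min_def)
    show "\<And>x i. 0 \<le> (\<chi> i. clamp (- x $ i)) $ i" by (auto simp: clamp_def)
    show "\<And>x y i. \<forall>i. x $ i \<le> y $ i \<Longrightarrow> (\<chi> i. clamp (- y $ i)) $ i \<le> (\<chi> i. clamp (- x $ i)) $ i"
      by (simp add: clamp_mono)
  qed
qed

theorem mainTheorem9:
  fixes \<theta> :: real and C :: "real^'n \<Rightarrow> real"
  assumes "CARD('n) \<ge> 2"
    and "0 \<le> \<theta>" and "\<theta> \<le> 1"
    and "\<And>u. C u = \<theta> * (\<Prod>i\<in>UNIV. u $ i) + (1 - \<theta>) * Min (range (\<lambda>i. u $ i))"
  shows "copula_is_I (\<chi> i. 1) C \<and> copula_is_I (\<chi> i. -1) C"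
proof -
  have C: "C = FF \<theta>" using assms(4) by (auto simp: FF_def)
  have p1: "prob_space (M0 \<theta> :: (real^'n) measure)" by (rule M0_facts(1)[OF assms(2,3)])
  have p2: "sets (M0 \<theta> :: (real^'n) measure) = sets borel" by (rule M0_facts(2)[OF assms(2,3)])
  have p3: "measure (M0 \<theta> :: (real^'n) measure) {y. \<forall>i. y $ i \<le> x $ i} = FF \<theta> (\<chi> i. max 0 (min 1 (x $ i)))" for x
    using M0_le[OF assms(2,3), of x] by (simp add: clamp_def)
  have ex: "has_copula_df C (M0 \<theta> :: (real^'n) measure)"
    unfolding has_copula_df_def C using p1 p2 p3 by blast
  have uq: "has_copula_df C M \<Longrightarrow> M = M0 \<theta>" for M :: "(real^'n) measure"
    using copula_unique[OF assms(2,3)] C by simp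
  show ?thesis unfolding copula_is_I_def
    using ex uq is_I_M0[OF assms(1-3)] by blast
qed

end
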